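(* Let $\pi$ be a permutation-invariant probability density on $\mathbb{X}^n$ and $q$ a probability density on $\mathbb{X}$. For any $x\in\mathbb{X}^n$ and $y\in\mathbb{X}$, $$\sum_{i=1}^n\frac{w_i(y,x)}{W(y,x)}\,\alpha_i^{\mathrm{SOMA}}(y,x)\;\ge\;\sum_{i=1}^n\frac1n\,\alpha_i^{\mathrm{IMwG}}(y,x).$$
   Context: Permutation invariance: $\pi(x_{\sigma(1)},\dots,x_{\sigma(n)})=\pi(x)$ for all permutations $\sigma$. $[x_{-i},y]$ is $x$ with its $i$-th component replaced by $y$. Weights: $w_i(y,x)=\pi([x_{-i},y])/\big(q(y)\prod_{j\ne i}q(x_j)\big)$ ($1\le i\le n$), $w_0(y,x)=\pi(x)/\prod_j q(x_j)$, $W(y,x)=\sum_{i=1}^n w_i(y,x)$ (well-defined, positive). $\alpha_i^{\mathrm{SOMA}}(y,x)=\min\{1,W/(W+w_0-w_i)\}$ and $\alpha_i^{\mathrm{IMwG}}(y,x)=\min\{1,w_i(y,x)/w_0(y,x)\}$. *)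

theory Defs
  imports "HOL-Probability.Probability" "HOL-Combinatorics.Permutations"
begin

text \<open>Points of X^n are extensional functions on the index set {..<n}
  (elements of space (PiM {..<n} (\<lambda>_. M))); component i of the paper
  is component i-1 here. [x_{-i},y] is the function update x(i := y).\<close>

definition perm_invariant :: "nat \<Rightarrow> ((nat \<Rightarrow> 'a) \<Rightarrow> real) \<Rightarrow> bool" where
  "perm_invariant n \<pi> \<longleftrightarrow> (\<forall>\<sigma> x. \<sigma> permutes {..<n} \<longrightarrow> x \<in> extensional {..<n} \<longrightarrow> \<pi> (x \<circ> \<sigma>) = \<pi> x)"

definition prob_density :: "'b measure \<Rightarrow> ('b \<Rightarrow> real) \<Rightarrow> bool" where
  "prob_density N f \<longleftrightarrow> f \<in> borel_measurable N \<and> (\<forall>z\<in>space N. 0 \<le> f z)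
     \<and> (\<integral>\<^sup>+ z. ennreal (f z) \<partial>N) = 1"

definition wi :: "nat \<Rightarrow> ((nat \<Rightarrow> 'a) \<Rightarrow> real) \<Rightarrow> ('a \<Rightarrow> real) \<Rightarrow> nat \<Rightarrow> 'a \<Rightarrow> (nat \<Rightarrow> 'a) \<Rightarrow> real" where
  "wi n \<pi> q i y x = \<pi> (x(i := y)) / (q y * (\<Prod>j\<in>{..<n} - {i}. q (x j)))"

definition w0 :: "nat \<Rightarrow> ((nat \<Rightarrow> 'a) \<Rightarrow> real) \<Rightarrow> ('a \<Rightarrow> real) \<Rightarrow> 'a \<Rightarrow> (nat \<Rightarrow> 'a) \<Rightarrow> real" where
  "w0 n \<pi> q y x = \<pi> x / (\<Prod>j<n. q (x j))"

definition WW :: "nat \<Rightarrow> ((nat \<Rightarrow> 'a) \<Rightarrow> real) \<Rightarrow> ('a \<Rightarrow> real) \<Rightarrow> 'a \<Rightarrow> (nat \<Rightarrow> 'a) \<Rightarrow> real" where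
  "WW n \<pi> q y x = (\<Sum>i<n. wi n \<pi> q i y x)"

definition alpha_SOMA :: "nat \<Rightarrow> ((nat \<Rightarrow> 'a) \<Rightarrow> real) \<Rightarrow> ('a \<Rightarrow> real) \<Rightarrow> nat \<Rightarrow> 'a \<Rightarrow> (nat \<Rightarrow> 'a) \<Rightarrow> real" where
  "alpha_SOMA n \<pi> q i y x = min 1 (WW n \<pi> q y x /
      (WW n \<pi> q y x + w0 n \<pi> q y x - wi n \<pi> q i y x))"

definition alpha_IMwG :: "nat \<Rightarrow> ((nat \<Rightarrow> 'a) \<Rightarrow> real) \<Rightarrow> ('a \<Rightarrow> real) \<Rightarrow> nat \<Rightarrow> 'a \<Rightarrow> (nat \<Rightarrow> 'a) \<Rightarrow> real" where
  "alpha_IMwG n \<pi> q i y x = min 1 (wi n \<pi> q i y x / w0 n \<pi> q y x)"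

end

theory Submission
  imports Defs
begin

lemma arith1:
  fixes A B K N :: real
  assumes "A \<ge> K" "K \<ge> 0" "B \<ge> 0" "K + B \<le> N" "A + B > 0" "K + B > 0" "N > 0"
  shows "A/(A+B) + B/(A+N-K) \<ge> (K+B)/N"
proof -
  have d: "A + N - K > 0" using assms by linarith
  have m1: "A/(A+B) - K/(K+B) = B*(A-K)/((A+B)*(K+B))" using assms by (simp add: field_simps)
  have m2: "B/N - B/(A+N-K) = B*(A-K)/(N*(A+N-K))" using assms d by (simp add: field_simps)
  have "(A+B)*(K+B) \<le> (A+N-K)*N"
    using assms by (intro mult_mono) auto
  hence "(A+B)*(K+B) \<le> N*(A+N-K)" by (simp add: mult.commute)
  hence "B*(A-K)/(N*(A+N-K)) \<le> B*(A-K)/((A+B)*(K+B))"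
    using assms d by (intro divide_left_mono mult_nonneg_nonneg mult_pos_pos) auto
  hence s1: "A/(A+B) + B/(A+N-K) \<ge> K/(K+B) + B/N" using m1 m2 by linarith
  have "K/(K+B) \<ge> K/N" using assms by (intro divide_left_mono) auto
  moreover have "(K+B)/N = K/N + B/N" by (simp add: add_divide_distrib)
  ultimately show ?thesis using s1 by linarith
qed

lemma main_ineq:
  fixes w :: "nat \<Rightarrow> real" and c :: real
  assumes n: "n \<ge> 1" and c: "c > 0" and w: "\<forall>i<n. w i \<ge> 0" and W: "(\<Sum>j<n. w j) > 0"
  shows "(\<Sum>i<n. w i / (\<Sum>j<n. w j) * min 1 ((\<Sum>j<n. w j)/((\<Sum>j<n. w j) + c - w i)))
     \<ge> (\<Sum>i<n. 1/real n * min 1 (w i / c))"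
proof -
  define W where "W = (\<Sum>j<n. w j)"
  define S where "S = {i\<in>{..<n}. w i \<ge> c}"
  define T where "T = {i\<in>{..<n}. w i < c}"
  define A where "A = sum w S"
  define B where "B = sum w T"
  define K where "K = real (card S) * c"
  define N where "N = real n * c"
  have fin: "finite S" "finite T" unfolding S_def T_def by auto
  have un: "{..<n} = S \<union> T" and dj: "S \<inter> T = {}" unfolding S_def T_def by auto
  have cardST: "card S + card T = n" using card_Un_disjoint[OF fin dj] un by (metis card_lessThan)
  have WAB: "W = A + B" unfolding W_def A_def B_def un using sum.union_disjoint[OF fin dj] by simp
  have A0: "A \<ge> 0" unfolding A_def using w by (intro sum_nonneg) (auto simp: S_def)
  have B0: "B \<ge> 0" unfolding B_def using w by (intro sum_nonneg) (auto simp: T_def)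
  have AK: "A \<ge> K" unfolding A_def K_def
    using sum_mono[of S "\<lambda>_. c" w] by (auto simp: S_def)
  have BT: "B \<le> real (card T) * c" unfolding B_def
    using sum_mono[of T w "\<lambda>_. c"] by (auto simp: T_def)
  have NK: "N - K = real (card T) * c" unfolding N_def K_def using cardST
    by (metis add_diff_cancel_left' diff_add_cancel left_diff_distrib' of_nat_add)
  have Wp: "W > 0" using W W_def by simp
  have termS: "w i / W * min 1 (W/(W + c - w i)) = w i / W" if "i \<in> S" for i
  proof -
    have "w i \<le> W" unfolding W_def using w that
      by (intro member_le_sum) (auto simp: S_def)
    hence "W/(W + c - w i) \<ge> 1" using c Wp that by (simp add: field_simps S_def)
    thus ?thesis by simp
  qed
  have termT: "w i / W * min 1 (W/(W + c - w i)) \<ge> w i / (A + N - K)" if "i \<in> T" for i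
  proof -
    have iT: "i < n" "w i < c" "w i \<ge> 0" using that w by (auto simp: T_def)
    have ct: "card T \<ge> 1" using that fin by (metis One_nat_def Suc_leI card_gt_0_iff empty_iff)
    have "sum w (T - {i}) \<le> real (card (T - {i})) * c"
      using sum_mono[of "T - {i}" w "\<lambda>_. c"] by (auto simp: T_def)
    moreover have "B = w i + sum w (T - {i})" unfolding B_def using fin that
      by (simp add: sum.remove)
    moreover have "real (card (T - {i})) = real (card T) - 1" using that fin ct by simp
    ultimately have D: "W + c - w i \<le> A + N - K" using WAB NK by (simp add: algebra_simps)
    have D2: "W \<le> A + N - K" using WAB NK BT by simp
    have pos: "W + c - w i > 0" using Wp iT by simp
    have "w i / (A + N - K) \<le> w i / W" using D2 Wp iT by (intro divide_left_mono) auto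
    moreover have "w i / (A + N - K) \<le> w i / (W + c - w i)" using D pos iT by (intro divide_left_mono) auto
    moreover have "w i / W * min 1 (W/(W + c - w i)) = min (w i / W) (w i / (W + c - w i))"
    proof -
      have a: "w i / W \<ge> 0" using Wp iT by simp
      have b: "w i / W * (W/(W + c - w i)) = w i / (W + c - w i)" using Wp by simp
      have "w i / W * min 1 (W/(W + c - w i)) = min (w i / W * 1) (w i / W * (W/(W + c - w i)))"
        using a by (simp add: min_mult_distrib_left)
      thus ?thesis using b by (simp only: mult_1_right)
    qed
    ultimately show ?thesis by simp
  qed
  have L: "(\<Sum>i<n. w i / W * min 1 (W/(W + c - w i))) \<ge> A/(A+B) + B/(A+N-K)"
  proof -
    have "(\<Sum>i<n. w i / W * min 1 (W/(W + c - w i))) =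
      (\<Sum>i\<in>S. w i / W * min 1 (W/(W + c - w i))) + (\<Sum>i\<in>T. w i / W * min 1 (W/(W + c - w i)))"
      unfolding un using sum.union_disjoint[OF fin dj] by simp
    moreover have "(\<Sum>i\<in>S. w i / W * min 1 (W/(W + c - w i))) = A / W"
    proof -
      have "(\<Sum>i\<in>S. w i / W * min 1 (W/(W + c - w i))) = (\<Sum>i\<in>S. w i / W)"
        using termS by (intro sum.cong) auto
      thus ?thesis by (simp add: A_def sum_divide_distrib)
    qed
    moreover have "(\<Sum>i\<in>T. w i / W * min 1 (W/(W + c - w i))) \<ge> (\<Sum>i\<in>T. w i / (A + N - K))"
      using termT by (intro sum_mono) auto
    moreover have "(\<Sum>i\<in>T. w i / (A + N - K)) = B / (A + N - K)"
      by (simp add: B_def sum_divide_distrib)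
    ultimately show ?thesis using WAB by simp
  qed
  have R: "(\<Sum>i<n. 1/real n * min 1 (w i / c)) = (K + B)/N"
  proof -
    have "(\<Sum>i<n. 1/real n * min 1 (w i / c)) =
      (\<Sum>i\<in>S. 1/real n * min 1 (w i / c)) + (\<Sum>i\<in>T. 1/real n * min 1 (w i / c))"
      unfolding un using sum.union_disjoint[OF fin dj] by simp
    moreover have "(\<Sum>i\<in>S. 1/real n * min 1 (w i / c)) = (\<Sum>i\<in>S. 1/real n)"
      using c by (intro sum.cong) (auto simp: S_def min_def field_simps)
    moreover have "(\<Sum>i\<in>T. 1/real n * min 1 (w i / c)) = (\<Sum>i\<in>T. w i / (real n * c))"
      using c by (intro sum.cong) (auto simp: T_def min_def field_simps)
    ultimately show ?thesis using c n
      by (simp add: K_def N_def B_def sum_divide_distrib[symmetric] add_divide_distrib)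
  qed
  have "K \<ge> 0" using c by (simp add: K_def)
  moreover have "K + B \<le> N" using BT NK by simp
  moreover have "K + B > 0"
  proof (cases "S = {}")
    case True thus ?thesis using WAB Wp A_def B0 K_def by simp
  next
    case False thus ?thesis using fin c B0 by (simp add: K_def card_gt_0_iff add_pos_nonneg)
  qed
  moreover have "N > 0" using n c by (simp add: N_def)
  ultimately have "A/(A+B) + B/(A+N-K) \<ge> (K+B)/N"
    using arith1[of K A B N] AK B0 WAB Wp by simp
  thus ?thesis using L R W_def by simp
qed
theorem lemma3:
  fixes M :: "'a measure" and n :: nat and \<pi> :: "(nat \<Rightarrow> 'a) \<Rightarrow> real" and q :: "'a \<Rightarrow> real"
    and x :: "nat \<Rightarrow> 'a" and y :: 'a
  assumes n: "n \<ge> 1"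
    and pi_dens: "prob_density (PiM {..<n} (\<lambda>_. M)) \<pi>"
    and pi_inv: "perm_invariant n \<pi>"
    and q_dens: "prob_density M q"
    and q_pos: "\<forall>z\<in>space M. q z > 0"
    and x: "x \<in> space (PiM {..<n} (\<lambda>_. M))" and y: "y \<in> space M"
    and pi_x_pos: "\<pi> x > 0"
    and W_pos: "\<exists>i<n. \<pi> (x(i := y)) > 0"
  shows "(\<Sum>i<n. wi n \<pi> q i y x / WW n \<pi> q y x * alpha_SOMA n \<pi> q i y x)
           \<ge> (\<Sum>i<n. 1 / real n * alpha_IMwG n \<pi> q i y x)"
proof -
  have pinn: "\<forall>z\<in>space (PiM {..<n} (\<lambda>_. M)). 0 \<le> \<pi> z"
    using pi_dens by (simp add: prob_density_def)
  have xs: "\<And>j. j < n \<Longrightarrow> x j \<in> space M" using x by (auto simp: space_PiM)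
  have upd: "\<And>i. i < n \<Longrightarrow> x(i := y) \<in> space (PiM {..<n} (\<lambda>_. M))"
  proof -
    fix i assume "i < n"
    hence "insert i {..<n} = {..<n}" by auto
    moreover have "x \<in> PiE {..<n} (\<lambda>_. space M)" using x by (simp add: space_PiM)
    ultimately have "x(i := y) \<in> PiE {..<n} (\<lambda>_. space M)" using PiE_fun_upd[of y "\<lambda>_. space M" i x "{..<n}"] y by simp
    thus "x(i := y) \<in> space (PiM {..<n} (\<lambda>_. M))" by (simp add: space_PiM)
  qed
  have prodpos: "\<And>i. i < n \<Longrightarrow> q y * (\<Prod>j\<in>{..<n} - {i}. q (x j)) > 0"
    using q_pos xs y by (intro mult_pos_pos prod_pos) auto
  have wnn: "\<forall>i<n. wi n \<pi> q i y x \<ge> 0"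
    unfolding wi_def using pinn upd prodpos by (simp add: less_imp_le)
  have w0p: "w0 n \<pi> q y x > 0" unfolding w0_def
    using pi_x_pos q_pos xs by (intro divide_pos_pos prod_pos) auto
  obtain i0 where i0: "i0 < n" "\<pi> (x(i0 := y)) > 0" using W_pos by blast
  have "wi n \<pi> q i0 y x > 0" unfolding wi_def using i0 prodpos by simp
  hence Wp: "(\<Sum>j<n. wi n \<pi> q j y x) > 0"
  proof -
    have "wi n \<pi> q i0 y x \<le> (\<Sum>j<n. wi n \<pi> q j y x)"
      using wnn i0 by (intro member_le_sum) auto
    thus ?thesis using \<open>wi n \<pi> q i0 y x > 0\<close> by linarith
  qed
  show ?thesis
    unfolding alpha_SOMA_def alpha_IMwG_def WW_def
    by (rule main_ineq[OF n w0p wnn Wp])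
qed

end
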